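(* Assume Assumptions (A) and (B) and suppose $\|\theta_0-\theta_{*,p}\|\le c_0\delta_n^{1/\beta}$. Then there exist $c,c'>0$ such that for any sufficiently large $L$, $$\mathbb P^n_{\theta_0}\Big(\Big\|\int\theta\,d\Pi(\theta\mid Z^{(n)})-\theta_0\Big\|>e^{-n\delta_n^2}+L^{1/\beta}\delta_n^{1/\beta}\Big)\le c'e^{-cn\delta_n^2}.$$
   Context: Let $\Theta\subset\ell^2(\mathbb N)$ contain $\mathbb R^p$ (sequences vanishing after coordinate $p$); $\|\cdot\|$ is the $\ell^2$ norm. For $\theta\in\Theta$, $\mathbb P_\theta$ has density $p_\theta$ w.r.t. a measure $\nu$ on $\mathcal Z$; data $Z^{(n)}=(Z_i)_{i\le n}$ have law $\otimes_i\mathbb P_\theta$; $\ell_n(\theta)=\sum_i\log p_\theta(Z_i)$. The prior $\Pi$ is supported on $\mathbb R^p$ with Lebesgue density $\pi$ and the posterior $\Pi(\cdot\mid Z^{(n)})$ has density $\propto e^{\ell_n}\pi$. A function $f$ is $m$-strongly concave if $f(\theta')\le f(\theta)+(\theta'-\theta)^\top\nabla f(\theta)-\frac m2\|\theta-\theta'\|^2$ for all $\theta,\theta'$. Assumption (A): the data have law $\mathbb P^n_{\theta_0}$ for fixed $\theta_0\in\Theta$; there are $c_0>0$, $\theta_{*,p}\in\mathbb R^p$ with $\|\theta_{*,p}\|\le c_0$ and $0<\delta_n\to0$ such that for some $\beta\ge1$, any $c>0$ and any sufficiently large $L$ there are $C_1,\dots,C_4>0$ with $\mathbb P^n_{\theta_0}(\Pi(\{\theta:\|\theta-\theta_{*,p}\|^\beta>L\delta_n\}\mid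 Z^{(n)})\ge e^{-cn\delta_n^2})\le C_2e^{-C_1n\delta_n^2}$ and $\mathbb P^n_{\theta_0}(\int_{\|\theta-\theta_{*,p}\|\le\delta_n}e^{\ell_n(\theta)-\ell_n(\theta_0)}\pi(\theta)d\theta\le e^{-C_3n\delta_n^2})\le e^{-C_4n\delta_n^2}$. Assumption (B): $\log\pi$ is $m_\pi$-strongly concave with $\Lambda_\pi$-Lipschitz gradient, its maximiser has norm $\le c_0$, and the fourth moments of $\Pi$ are bounded uniformly in $n$ and $p$. *)

theory Defs
  imports "HOL-Probability.Probability"
begin

definition l2seq :: "(nat \<Rightarrow> real) set" where
  "l2seq = {x. summable (\<lambda>i. (x i)^2)}"

definition l2norm :: "(nat \<Rightarrow> real) \<Rightarrow> real" where
  "l2norm x = sqrt (\<Sum>i. (x i)^2)"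

text \<open>R^p inside l2: sequences vanishing from coordinate p on (coordinates 0..p-1).\<close>
definition Rp :: "nat \<Rightarrow> (nat \<Rightarrow> real) set" where
  "Rp p = {x. \<forall>i\<ge>p. x i = 0}"

definition ext0 :: "nat \<Rightarrow> (nat \<Rightarrow> real) \<Rightarrow> (nat \<Rightarrow> real)" where
  "ext0 p x = (\<lambda>i. if i < p then x i else 0)"

definition Leb :: "nat \<Rightarrow> (nat \<Rightarrow> real) measure" where
  "Leb p = PiM {..<p} (\<lambda>_. lborel)"

text \<open>Likelihood exp(l_n(theta)) = prod_{i<n} p_theta(Z_i).\<close>
definition lik :: "((nat \<Rightarrow> real) \<Rightarrow> 'z \<Rightarrow> real) \<Rightarrow> nat \<Rightarrow> (nat \<Rightarrow> real) \<Rightarrow> (nat \<Rightarrow> 'z) \<Rightarrow> real" where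
  "lik dens n \<theta> Z = (\<Prod>i<n. dens \<theta> (Z i))"

definition sample :: "'z measure \<Rightarrow> ((nat \<Rightarrow> real) \<Rightarrow> 'z \<Rightarrow> real) \<Rightarrow> (nat \<Rightarrow> real) \<Rightarrow> nat \<Rightarrow> (nat \<Rightarrow> 'z) measure" where
  "sample \<nu> dens \<theta> n = PiM {..<n} (\<lambda>_. density \<nu> (dens \<theta>))"

definition post_norm :: "((nat \<Rightarrow> real) \<Rightarrow> 'z \<Rightarrow> real) \<Rightarrow> ((nat \<Rightarrow> real) \<Rightarrow> real) \<Rightarrow> nat \<Rightarrow> nat \<Rightarrow> (nat \<Rightarrow> 'z) \<Rightarrow> real" where
  "post_norm dens \<pi> n p Z = (\<integral>x. lik dens n (ext0 p x) Z * \<pi> (ext0 p x) \<partial>Leb p)"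

definition post_prob :: "((nat \<Rightarrow> real) \<Rightarrow> 'z \<Rightarrow> real) \<Rightarrow> ((nat \<Rightarrow> real) \<Rightarrow> real) \<Rightarrow> nat \<Rightarrow> nat \<Rightarrow> (nat \<Rightarrow> 'z) \<Rightarrow> (nat \<Rightarrow> real) set \<Rightarrow> real" where
  "post_prob dens \<pi> n p Z A =
     (\<integral>x. indicator A (ext0 p x) * lik dens n (ext0 p x) Z * \<pi> (ext0 p x) \<partial>Leb p) / post_norm dens \<pi> n p Z"

definition post_mean :: "((nat \<Rightarrow> real) \<Rightarrow> 'z \<Rightarrow> real) \<Rightarrow> ((nat \<Rightarrow> real) \<Rightarrow> real) \<Rightarrow> nat \<Rightarrow> nat \<Rightarrow> (nat \<Rightarrow> 'z) \<Rightarrow> (nat \<Rightarrow> real)" where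
  "post_mean dens \<pi> n p Z = (\<lambda>j.
     (\<integral>x. ext0 p x j * lik dens n (ext0 p x) Z * \<pi> (ext0 p x) \<partial>Leb p) / post_norm dens \<pi> n p Z)"

end

theory Submission
  imports Defs
begin


lemma l2norm_fin:
  assumes "\<And>i. i \<ge> p \<Longrightarrow> y i = 0"
  shows "l2norm y = sqrt (\<Sum>i<p. (y i)^2)"
proof -
  have "(\<Sum>i. (y i)^2) = (\<Sum>i<p. (y i)^2)"
    by (rule suminf_finite) (auto simp: assms)
  then show ?thesis by (simp add: l2norm_def)
qed

lemma l2_summable_fin:
  fixes y :: "nat \<Rightarrow> real"
  assumes "\<And>i. i \<ge> p \<Longrightarrow> y i = 0"
  shows "summable (\<lambda>i. (y i)^2)"
  by (rule summable_finite[of "{..<p}"]) (auto simp: assms not_less)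

lemma l2_summable_add:
  fixes x y :: "nat \<Rightarrow> real"
  assumes "summable (\<lambda>i. (x i)^2)" "summable (\<lambda>i. (y i)^2)"
  shows "summable (\<lambda>i. (x i + y i)^2)"
proof (rule summable_comparison_test[where g="\<lambda>i. 2*(x i)^2 + 2*(y i)^2"])
  show "\<exists>N. \<forall>n\<ge>N. norm ((x n + y n)\<^sup>2) \<le> 2 * (x n)\<^sup>2 + 2 * (y n)\<^sup>2"
  proof (intro exI[of _ 0] allI impI)
    fix n :: nat
    have "(x n + y n)^2 \<le> 2 * (x n)\<^sup>2 + 2 * (y n)\<^sup>2"
      using zero_le_square[of "x n - y n"] by (simp add: power2_eq_square algebra_simps)
    then show "norm ((x n + y n)\<^sup>2) \<le> 2 * (x n)\<^sup>2 + 2 * (y n)\<^sup>2" by simp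
  qed
  show "summable (\<lambda>n. 2 * (x n)\<^sup>2 + 2 * (y n)\<^sup>2)"
    using assms by (intro summable_add summable_mult) auto
qed

lemma l2norm_triangle:
  fixes x y :: "nat \<Rightarrow> real"
  assumes sx: "summable (\<lambda>i. (x i)^2)" and sy: "summable (\<lambda>i. (y i)^2)"
  shows "l2norm (\<lambda>i. x i + y i) \<le> l2norm x + l2norm y"
proof -
  have sxy: "summable (\<lambda>i. (x i + y i)^2)" using l2_summable_add[OF sx sy] .
  have part: "sum (\<lambda>i. (x i + y i)^2) {..<N} \<le> (l2norm x + l2norm y)^2" for N
  proof -
    have "L2_set (\<lambda>i. x i + y i) {..<N} \<le> L2_set x {..<N} + L2_set y {..<N}"
      by (rule L2_set_triangle_ineq)
    also have "L2_set x {..<N} \<le> l2norm x"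
      unfolding L2_set_def l2norm_def
      by (intro real_sqrt_le_mono sum_le_suminf sx) auto
    also have "L2_set y {..<N} \<le> l2norm y"
      unfolding L2_set_def l2norm_def
      by (intro real_sqrt_le_mono sum_le_suminf sy) auto
    finally have "L2_set (\<lambda>i. x i + y i) {..<N} \<le> l2norm x + l2norm y" by simp
    then have "(L2_set (\<lambda>i. x i + y i) {..<N})^2 \<le> (l2norm x + l2norm y)^2"
      by (intro power_mono) (auto simp: L2_set_def intro!: sum_nonneg)
    then show ?thesis by (simp add: L2_set_def sum_nonneg)
  qed
  have "(\<Sum>i. (x i + y i)^2) \<le> (l2norm x + l2norm y)^2"
    by (rule suminf_le_const[OF sxy part])
  then have "sqrt (\<Sum>i. (x i + y i)^2) \<le> sqrt ((l2norm x + l2norm y)^2)"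
    by (rule real_sqrt_le_mono)
  also have "\<dots> = l2norm x + l2norm y"
    using suminf_nonneg[OF sx] suminf_nonneg[OF sy] by (simp add: l2norm_def)
  finally show ?thesis by (simp add: l2norm_def)
qed


lemma one_density_le1:
  fixes d0 d1 :: "'z \<Rightarrow> real"
  assumes m0[measurable]: "d0 \<in> borel_measurable \<nu>" and m1[measurable]: "d1 \<in> borel_measurable \<nu>"
    and n0: "\<And>z. z \<in> space \<nu> \<Longrightarrow> 0 \<le> d0 z"
    and n1: "\<And>z. z \<in> space \<nu> \<Longrightarrow> 0 \<le> d1 z"
    and P1: "prob_space (density \<nu> d1)"
  shows "(\<integral>\<^sup>+ z. ennreal (d1 z / d0 z) \<partial>density \<nu> d0) \<le> 1"
proof -
  have "(\<integral>\<^sup>+ z. ennreal (d1 z / d0 z) \<partial>density \<nu> d0) = (\<integral>\<^sup>+ z. ennreal (d0 z) * ennreal (d1 z / d0 z) \<partial>\<nu>)"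
    by (rule nn_integral_density) auto
  also have "\<dots> \<le> (\<integral>\<^sup>+ z. ennreal (d1 z) * indicator (space \<nu>) z \<partial>\<nu>)"
  proof (rule nn_integral_mono)
    fix z assume z: "z \<in> space \<nu>"
    have "d0 z * (d1 z / d0 z) \<le> d1 z"
      using n0[OF z] n1[OF z] by (cases "d0 z = 0") auto
    then show "ennreal (d0 z) * ennreal (d1 z / d0 z) \<le> ennreal (d1 z) * indicator (space \<nu>) z"
      using z n0[OF z] n1[OF z] by (simp add: ennreal_mult[symmetric] ennreal_leI)
  qed
  also have "\<dots> = emeasure (density \<nu> d1) (space \<nu>)"
    by (subst emeasure_density) auto
  also have "\<dots> = 1"
    using prob_space.emeasure_space_1[OF P1] by simp
  finally show ?thesis .
qed

lemma lik_ratio_le1: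
  fixes d0 :: "'z \<Rightarrow> real"
  assumes m0[measurable]: "dens \<theta>0 \<in> borel_measurable \<nu>" and m1[measurable]: "dens \<theta> \<in> borel_measurable \<nu>"
    and n0: "\<And>z. z \<in> space \<nu> \<Longrightarrow> 0 \<le> dens \<theta>0 z"
    and n1: "\<And>z. z \<in> space \<nu> \<Longrightarrow> 0 \<le> dens \<theta> z"
    and P0: "prob_space (density \<nu> (dens \<theta>0))"
    and P1: "prob_space (density \<nu> (dens \<theta>))"
  shows "(\<integral>\<^sup>+ Z. ennreal (lik dens n \<theta> Z / lik dens n \<theta>0 Z) \<partial>sample \<nu> dens \<theta>0 n) \<le> 1"
proof -
  interpret product_sigma_finite "\<lambda>_. density \<nu> (dens \<theta>0)"
    unfolding product_sigma_finite_def using prob_space_imp_sigma_finite[OF P0] by simp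
  have sp: "space (sample \<nu> dens \<theta>0 n) = PiE {..<n} (\<lambda>_. space \<nu>)"
    by (simp add: sample_def space_PiM)
  have "(\<integral>\<^sup>+ Z. ennreal (lik dens n \<theta> Z / lik dens n \<theta>0 Z) \<partial>sample \<nu> dens \<theta>0 n)
      = (\<integral>\<^sup>+ Z. (\<Prod>i\<in>{..<n}. (\<lambda>_ z. ennreal (dens \<theta> z / dens \<theta>0 z)) i (Z i)) \<partial>sample \<nu> dens \<theta>0 n)"
  proof (rule nn_integral_cong)
    fix Z assume "Z \<in> space (sample \<nu> dens \<theta>0 n)"
    then have Z: "\<And>i. i < n \<Longrightarrow> Z i \<in> space \<nu>" by (auto simp: sp)
    have "lik dens n \<theta> Z / lik dens n \<theta>0 Z = (\<Prod>i<n. dens \<theta> (Z i) / dens \<theta>0 (Z i))"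
      by (simp add: lik_def prod_dividef)
    then show "ennreal (lik dens n \<theta> Z / lik dens n \<theta>0 Z) = (\<Prod>i\<in>{..<n}. (\<lambda>_ z. ennreal (dens \<theta> z / dens \<theta>0 z)) i (Z i))"
      using Z n0 n1 by (subst prod_ennreal) auto
  qed
  also have "\<dots> = (\<Prod>i\<in>{..<n}. \<integral>\<^sup>+ z. ennreal (dens \<theta> z / dens \<theta>0 z) \<partial>density \<nu> (dens \<theta>0))"
    unfolding sample_def by (subst product_nn_integral_prod) auto
  also have "\<dots> \<le> (\<Prod>i\<in>{..<n}. 1)"
    by (intro prod_mono_ennreal one_density_le1) (use assms in auto)
  finally show ?thesis by simp
qed


lemma Leb_comp_meas[measurable]: "j < p \<Longrightarrow> (\<lambda>x. x j) \<in> borel_measurable (Leb p)"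
  unfolding Leb_def using measurable_component_singleton[of j "{..<p}" "\<lambda>_. lborel"] by simp

lemma r_meas[measurable]: "(\<lambda>x. sqrt (\<Sum>j<p. (x j - c j)^2)) \<in> borel_measurable (Leb p)"
proof -
  have [measurable]: "(\<lambda>x. \<Sum>j<p. (x j - c j)^2) \<in> borel_measurable (Leb p)"
    by (rule borel_measurable_sum) (use Leb_comp_meas in auto)
  show ?thesis by measurable
qed

lemma vec_mean_bound:
  fixes w :: "(nat \<Rightarrow> real) \<Rightarrow> real" and c :: "nat \<Rightarrow> real"
  assumes w_int: "integrable (Leb p) w" and w_nn: "\<And>x. x \<in> space (Leb p) \<Longrightarrow> 0 \<le> w x"
    and Dpos: "0 < (\<integral>x. w x \<partial>Leb p)"
    and xint: "\<And>j. j < p \<Longrightarrow> integrable (Leb p) (\<lambda>x. x j * w x)"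
  shows "integrable (Leb p) (\<lambda>x. sqrt (\<Sum>j<p. (x j - c j)^2) * w x)"
    and "sqrt (\<Sum>j<p. ((\<integral>x. x j * w x \<partial>Leb p) / (\<integral>x. w x \<partial>Leb p) - c j)^2)
         \<le> (\<integral>x. sqrt (\<Sum>j<p. (x j - c j)^2) * w x \<partial>Leb p) / (\<integral>x. w x \<partial>Leb p)"
proof -
  define D where "D = (\<integral>x. w x \<partial>Leb p)"
  define r where "r = (\<lambda>x. sqrt (\<Sum>j<p. (x j - c j)^2))"
  define u where "u = (\<lambda>j. (\<integral>x. x j * w x \<partial>Leb p) / D - c j)"
  have w_meas[measurable]: "w \<in> borel_measurable (Leb p)" using w_int by auto
  have vint: "integrable (Leb p) (\<lambda>x. (x j - c j) * w x)" if "j < p" for j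
  proof -
    have "integrable (Leb p) (\<lambda>x. x j * w x - c j * w x)"
      using xint[OF that] w_int by auto
    then show ?thesis by (simp add: algebra_simps)
  qed
  have rint: "integrable (Leb p) (\<lambda>x. r x * w x)"
  proof (rule Bochner_Integration.integrable_bound[where f="\<lambda>x. \<Sum>j<p. \<bar>(x j - c j) * w x\<bar>"])
    show "integrable (Leb p) (\<lambda>x. \<Sum>j<p. \<bar>(x j - c j) * w x\<bar>)"
    proof (intro Bochner_Integration.integrable_sum integrable_abs)
      fix j assume "j \<in> {..<p}" then show "integrable (Leb p) (\<lambda>x. (x j - c j) * w x)" using vint by auto
    qed
    show "(\<lambda>x. r x * w x) \<in> borel_measurable (Leb p)" unfolding r_def by measurable
    show "AE x in Leb p. norm (r x * w x) \<le> norm (\<Sum>j<p. \<bar>(x j - c j) * w x\<bar>)"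
    proof (rule AE_I2)
      fix x assume x: "x \<in> space (Leb p)"
      have "r x \<le> (\<Sum>j<p. \<bar>x j - c j\<bar>)"
        unfolding r_def using L2_set_le_sum_abs[of "\<lambda>j. x j - c j" "{..<p}"] by (simp add: L2_set_def)
      then have "r x * w x \<le> (\<Sum>j<p. \<bar>x j - c j\<bar>) * w x"
        using w_nn[OF x] by (rule mult_right_mono)
      also have "\<dots> = (\<Sum>j<p. \<bar>(x j - c j) * w x\<bar>)"
        using w_nn[OF x] by (simp add: sum_distrib_right abs_mult)
      finally show "norm (r x * w x) \<le> norm (\<Sum>j<p. \<bar>(x j - c j) * w x\<bar>)"
        using w_nn[OF x] by (simp add: r_def sum_nonneg)
    qed
  qed
  then show "integrable (Leb p) (\<lambda>x. sqrt (\<Sum>j<p. (x j - c j)^2) * w x)" by (simp add: r_def)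
  have uj: "u j = (\<integral>x. (x j - c j) * w x \<partial>Leb p) / D" if "j < p" for j
  proof -
    have "(\<integral>x. (x j - c j) * w x \<partial>Leb p) = (\<integral>x. x j * w x - c j * w x \<partial>Leb p)"
      by (simp add: algebra_simps)
    also have "\<dots> = (\<integral>x. x j * w x \<partial>Leb p) - c j * D"
      using xint[OF that] w_int by (simp add: D_def)
    finally show ?thesis using Dpos by (simp add: u_def D_def field_simps)
  qed
  define nu where "nu = sqrt (\<Sum>j<p. (u j)^2)"
  have "nu^2 = (\<Sum>j<p. u j * u j)" by (simp add: nu_def power2_eq_square sum_nonneg)
  also have "\<dots> = (\<Sum>j<p. u j * (\<integral>x. (x j - c j) * w x \<partial>Leb p)) / D"
    by (simp add: uj sum_divide_distrib)
  also have "(\<Sum>j<p. u j * (\<integral>x. (x j - c j) * w x \<partial>Leb p)) = (\<integral>x. (\<Sum>j<p. u j * ((x j - c j) * w x)) \<partial>Leb p)"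
  proof -
    have "(\<integral>x. (\<Sum>j<p. u j * ((x j - c j) * w x)) \<partial>Leb p) = (\<Sum>j<p. (\<integral>x. u j * ((x j - c j) * w x) \<partial>Leb p))"
      by (rule Bochner_Integration.integral_sum) (use vint in auto)
    then show ?thesis by simp
  qed
  also have "\<dots> \<le> (\<integral>x. nu * (r x * w x) \<partial>Leb p)"
  proof (rule integral_mono)
    show "integrable (Leb p) (\<lambda>x. \<Sum>j<p. u j * ((x j - c j) * w x))"
    proof (intro Bochner_Integration.integrable_sum integrable_mult_right)
      fix j assume "j \<in> {..<p}" then show "integrable (Leb p) (\<lambda>x. (x j - c j) * w x)" using vint by auto
    qed
    show "integrable (Leb p) (\<lambda>x. nu * (r x * w x))" using rint by auto
    fix x assume x: "x \<in> space (Leb p)"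
    have "(\<Sum>j<p. u j * (x j - c j)) \<le> (\<Sum>j<p. \<bar>u j\<bar> * \<bar>x j - c j\<bar>)"
      by (intro sum_mono) (simp add: abs_mult[symmetric])
    also have "\<dots> \<le> nu * r x"
      using L2_set_mult_ineq[of u "\<lambda>j. x j - c j" "{..<p}"] by (simp add: L2_set_def nu_def r_def)
    finally have "(\<Sum>j<p. u j * (x j - c j)) * w x \<le> nu * r x * w x"
      using w_nn[OF x] by (rule mult_right_mono)
    then show "(\<Sum>j<p. u j * ((x j - c j) * w x)) \<le> nu * (r x * w x)"
      by (simp add: sum_distrib_right mult.assoc)
  qed
  also have "\<dots> = nu * (\<integral>x. r x * w x \<partial>Leb p)" by simp
  finally have key: "nu^2 \<le> nu * (\<integral>x. r x * w x \<partial>Leb p) / D"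
    using Dpos by (simp add: D_def divide_right_mono)
  have "nu \<le> (\<integral>x. r x * w x \<partial>Leb p) / D"
  proof (cases "nu = 0")
    case True
    have "0 \<le> (\<integral>x. r x * w x \<partial>Leb p)"
      by (intro integral_nonneg_AE AE_I2) (auto simp: r_def w_nn sum_nonneg intro!: mult_nonneg_nonneg)
    then show ?thesis using True Dpos by (simp add: D_def)
  next
    case False
    then have "nu > 0" using sum_nonneg[of "{..<p}" "\<lambda>j. (u j)^2"] by (simp add: nu_def less_le)
    then show ?thesis using key by (simp add: power2_eq_square times_divide_eq_right[symmetric] mult_le_cancel_left_pos del: times_divide_eq_right)
  qed
  then show "sqrt (\<Sum>j<p. ((\<integral>x. x j * w x \<partial>Leb p) / (\<integral>x. w x \<partial>Leb p) - c j)^2)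
         \<le> (\<integral>x. sqrt (\<Sum>j<p. (x j - c j)^2) * w x \<partial>Leb p) / (\<integral>x. w x \<partial>Leb p)"
    by (simp add: nu_def u_def D_def r_def)
qed


lemma sample_comp_meas:
  "i < n \<Longrightarrow> (\<lambda>Z. Z i) \<in> measurable (sample \<nu> dens \<theta>0 n) \<nu>"
proof -
  assume "i < n"
  then have "(\<lambda>Z. Z i) \<in> measurable (sample \<nu> dens \<theta>0 n) (density \<nu> (dens \<theta>0))"
    unfolding sample_def by (intro measurable_component_singleton) auto
  then show ?thesis by (simp add: measurable_cong_sets[OF refl sets_density])
qed

lemma lik_joint_meas:
  assumes dj: "(\<lambda>(x, z). dens (ext0 p x) z) \<in> borel_measurable (Leb p \<Otimes>\<^sub>M \<nu>)"
  shows "(\<lambda>(Z, x). lik dens n (ext0 p x) Z) \<in> borel_measurable (sample \<nu> dens \<theta>0 n \<Otimes>\<^sub>M Leb p)"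
proof -
  have "(\<lambda>Zx. \<Prod>i<n. dens (ext0 p (snd Zx)) (fst Zx i)) \<in> borel_measurable (sample \<nu> dens \<theta>0 n \<Otimes>\<^sub>M Leb p)"
  proof (rule borel_measurable_prod)
    fix i assume "i \<in> {..<n}"
    then have i: "i < n" by simp
    have "(\<lambda>Zx. (snd Zx, fst Zx i)) \<in> measurable (sample \<nu> dens \<theta>0 n \<Otimes>\<^sub>M Leb p) (Leb p \<Otimes>\<^sub>M \<nu>)"
      by (intro measurable_Pair measurable_snd measurable_compose[OF measurable_fst sample_comp_meas[OF i]])
    from measurable_compose[OF this dj]
    show "(\<lambda>Zx. dens (ext0 p (snd Zx)) (fst Zx i)) \<in> borel_measurable (sample \<nu> dens \<theta>0 n \<Otimes>\<^sub>M Leb p)"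
      by simp
  qed
  then show ?thesis by (simp add: lik_def case_prod_beta')
qed

lemma lik0_meas:
  assumes "dens \<theta>0 \<in> borel_measurable \<nu>"
  shows "(\<lambda>Z. lik dens n \<theta>0 Z) \<in> borel_measurable (sample \<nu> dens \<theta>1 n)"
  unfolding lik_def
  by (rule borel_measurable_prod, rule measurable_compose[OF sample_comp_meas assms]) auto


lemma Leb_sigma_finite: "sigma_finite_measure (Leb p)"
proof -
  interpret product_sigma_finite "\<lambda>_::nat. lborel :: real measure"
    unfolding product_sigma_finite_def using sigma_finite_lborel by simp
  show ?thesis unfolding Leb_def by (rule sigma_finite) simp
qed

lemma ext0_Rp: "ext0 p x \<in> Rp p" by (simp add: ext0_def Rp_def)

lemma l2norm_ext0_diff:
  assumes "\<theta>s \<in> Rp p"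
  shows "l2norm (ext0 p x - \<theta>s) = sqrt (\<Sum>j<p. (x j - \<theta>s j)^2)"
proof -
  have "l2norm (ext0 p x - \<theta>s) = sqrt (\<Sum>j<p. ((ext0 p x - \<theta>s) j)^2)"
    by (rule l2norm_fin) (use assms in \<open>auto simp: ext0_def Rp_def\<close>)
  also have "(\<Sum>j<p. ((ext0 p x - \<theta>s) j)^2) = (\<Sum>j<p. (x j - \<theta>s j)^2)"
    by (rule sum.cong) (auto simp: ext0_def)
  finally show ?thesis .
qed

lemma ind_ext0:
  assumes "\<theta>s \<in> Rp p"
  shows "(indicator {\<theta>. Q (l2norm (\<theta> - \<theta>s))} (ext0 p x) :: real) = (if Q (sqrt (\<Sum>j<p. (x j - \<theta>s j)^2)) then 1 else 0)"
  using l2norm_ext0_diff[OF assms] by (simp add: indicator_def)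

lemma q_meas[measurable]: "(\<lambda>x. \<Sum>j<p. (x j - c j)^2) \<in> borel_measurable (Leb p)"
  by (rule borel_measurable_sum) (use Leb_comp_meas in auto)

lemma exp_ratio_int:
  fixes g :: "(nat \<Rightarrow> real) \<Rightarrow> real"
  assumes dm: "\<And>x. dens (ext0 p x) \<in> borel_measurable \<nu>"
    and dn: "\<And>x z. z \<in> space \<nu> \<Longrightarrow> 0 \<le> dens (ext0 p x) z"
    and dp: "\<And>x. prob_space (density \<nu> (dens (ext0 p x)))"
    and d0m: "dens \<theta>0 \<in> borel_measurable \<nu>"
    and d0n: "\<And>z. z \<in> space \<nu> \<Longrightarrow> 0 \<le> dens \<theta>0 z"
    and d0p: "prob_space (density \<nu> (dens \<theta>0))"
    and dj: "(\<lambda>(x, z). dens (ext0 p x) z) \<in> borel_measurable (Leb p \<Otimes>\<^sub>M \<nu>)"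
    and gm: "g \<in> borel_measurable (Leb p)" and gn: "\<And>x. 0 \<le> g x"
  shows "(\<lambda>(Z, x). ennreal (g x * (lik dens n (ext0 p x) Z / lik dens n \<theta>0 Z)))
           \<in> borel_measurable (sample \<nu> dens \<theta>0 n \<Otimes>\<^sub>M Leb p)" (is ?m)
    and "(\<integral>\<^sup>+ Z. (\<integral>\<^sup>+ x. ennreal (g x * (lik dens n (ext0 p x) Z / lik dens n \<theta>0 Z)) \<partial>Leb p) \<partial>sample \<nu> dens \<theta>0 n)
         \<le> (\<integral>\<^sup>+ x. ennreal (g x) \<partial>Leb p)"
proof -
  let ?P = "sample \<nu> dens \<theta>0 n"
  have lj: "(\<lambda>Zx. lik dens n (ext0 p (snd Zx)) (fst Zx)) \<in> borel_measurable (?P \<Otimes>\<^sub>M Leb p)"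
    using lik_joint_meas[OF dj, of n \<theta>0] by (simp add: case_prod_beta')
  have l0: "(\<lambda>Zx. lik dens n \<theta>0 (fst Zx)) \<in> borel_measurable (?P \<Otimes>\<^sub>M Leb p)"
    by (rule measurable_compose[OF measurable_fst lik0_meas[of dens \<theta>0 \<nu> n \<theta>0, OF d0m]])
  have gj: "(\<lambda>Zx. g (snd Zx)) \<in> borel_measurable (?P \<Otimes>\<^sub>M Leb p)"
    by (rule measurable_compose[OF measurable_snd gm])
  have "(\<lambda>Zx. ennreal (g (snd Zx) * (lik dens n (ext0 p (snd Zx)) (fst Zx) / lik dens n \<theta>0 (fst Zx))))
           \<in> borel_measurable (?P \<Otimes>\<^sub>M Leb p)"
    by (intro measurable_compose[OF _ measurable_ennreal] borel_measurable_times borel_measurable_divide gj lj l0)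
  then show ?m by (simp add: case_prod_beta')
  have Pprob: "prob_space ?P"
    unfolding sample_def by (rule prob_space_PiM) (use d0p in auto)
  interpret pair_sigma_finite ?P "Leb p"
    unfolding pair_sigma_finite_def using prob_space_imp_sigma_finite[OF Pprob] Leb_sigma_finite by auto
  have "(\<integral>\<^sup>+ Z. (\<integral>\<^sup>+ x. ennreal (g x * (lik dens n (ext0 p x) Z / lik dens n \<theta>0 Z)) \<partial>Leb p) \<partial>?P)
      = (\<integral>\<^sup>+ x. (\<integral>\<^sup>+ Z. ennreal (g x * (lik dens n (ext0 p x) Z / lik dens n \<theta>0 Z)) \<partial>?P) \<partial>Leb p)"
    using Fubini'[OF \<open>?m\<close>] by simp
  also have "\<dots> \<le> (\<integral>\<^sup>+ x. ennreal (g x) \<partial>Leb p)"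
  proof (rule nn_integral_mono)
    fix x
    have "(\<integral>\<^sup>+ Z. ennreal (g x * (lik dens n (ext0 p x) Z / lik dens n \<theta>0 Z)) \<partial>?P)
        = (\<integral>\<^sup>+ Z. ennreal (g x) * ennreal (lik dens n (ext0 p x) Z / lik dens n \<theta>0 Z) \<partial>?P)"
      using gn by (intro nn_integral_cong) (simp add: ennreal_mult' del: times_divide_eq_right)
    also have "\<dots> = ennreal (g x) * (\<integral>\<^sup>+ Z. ennreal (lik dens n (ext0 p x) Z / lik dens n \<theta>0 Z) \<partial>?P)"
      by (rule nn_integral_cmult)
        (intro measurable_compose[OF _ measurable_ennreal] borel_measurable_divide lik0_meas dm d0m)
    also have "\<dots> \<le> ennreal (g x) * 1"
      by (intro mult_left_mono lik_ratio_le1 dm d0m dn d0n d0p dp) auto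
    finally show "(\<integral>\<^sup>+ Z. ennreal (g x * (lik dens n (ext0 p x) Z / lik dens n \<theta>0 Z)) \<partial>?P) \<le> ennreal (g x)"
      by simp
  qed
  finally show "(\<integral>\<^sup>+ Z. (\<integral>\<^sup>+ x. ennreal (g x * (lik dens n (ext0 p x) Z / lik dens n \<theta>0 Z)) \<partial>Leb p) \<partial>?P)
         \<le> (\<integral>\<^sup>+ x. ennreal (g x) \<partial>Leb p)" .
qed


lemma sum_sq_ext0: "(\<Sum>j<p. (x j)^2) = (l2norm (ext0 p x))^2"
proof -
  have "l2norm (ext0 p x) = sqrt (\<Sum>j<p. (ext0 p x j)^2)"
    by (rule l2norm_fin) (auto simp: ext0_def)
  also have "(\<Sum>j<p. (ext0 p x j)^2) = (\<Sum>j<p. (x j)^2)"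
    by (rule sum.cong) (auto simp: ext0_def)
  finally show ?thesis by (simp add: sum_nonneg)
qed

lemma le_one_plus_sq: "(b::real) \<le> 1 + b^2"
proof -
  have "0 \<le> (b - 1/2) * (b - 1/2)" by simp
  then have "0 \<le> b*b - b + 1/4" by (simp add: algebra_simps)
  then show ?thesis by (simp add: power2_eq_square)
qed

lemma second_mom:
  fixes \<pi>n :: "(nat \<Rightarrow> real) \<Rightarrow> real" and \<theta>s :: "nat \<Rightarrow> real"
  assumes ths: "\<theta>s \<in> Rp p" and thb: "l2norm \<theta>s \<le> c0"
    and \<pi>pos: "\<And>x. 0 \<le> \<pi>n (ext0 p x)"
    and \<pi>i: "integrable (Leb p) (\<lambda>x. \<pi>n (ext0 p x))" and \<pi>1: "(\<integral>x. \<pi>n (ext0 p x) \<partial>Leb p) = 1"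
    and f4: "integrable (Leb p) (\<lambda>x. (l2norm (ext0 p x))^4 * \<pi>n (ext0 p x))"
    and f4M: "(\<integral>x. (l2norm (ext0 p x))^4 * \<pi>n (ext0 p x) \<partial>Leb p) \<le> M"
  shows "(\<integral>\<^sup>+ x. ennreal ((\<Sum>j<p. (x j - \<theta>s j)^2) * \<pi>n (ext0 p x)) \<partial>Leb p) \<le> ennreal (2 + 2*c0^2 + 2*\<bar>M\<bar>)"
proof -
  define g where "g = (\<lambda>x. (2 + 2*c0^2) * \<pi>n (ext0 p x) + 2 * ((l2norm (ext0 p x))^4 * \<pi>n (ext0 p x)))"
  have gi: "integrable (Leb p) g" unfolding g_def using \<pi>i f4 by auto
  have ths2: "(\<Sum>j<p. (\<theta>s j)^2) \<le> c0^2"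
  proof -
    have eq: "l2norm \<theta>s = sqrt (\<Sum>j<p. (\<theta>s j)^2)"
      by (rule l2norm_fin) (use ths in \<open>auto simp: Rp_def\<close>)
    then have "(\<Sum>j<p. (\<theta>s j)^2) = (l2norm \<theta>s)^2" by (simp add: sum_nonneg)
    also have "\<dots> \<le> c0^2"
      using thb eq by (intro power_mono) (auto simp: sum_nonneg)
    finally show ?thesis .
  qed
  have pw: "(\<Sum>j<p. (x j - \<theta>s j)^2) * \<pi>n (ext0 p x) \<le> g x" for x
  proof -
    have "(\<Sum>j<p. (x j - \<theta>s j)^2) \<le> (\<Sum>j<p. 2 * (x j)^2 + 2 * (\<theta>s j)^2)"
    proof (rule sum_mono)
      fix j
      show "(x j - \<theta>s j)^2 \<le> 2 * (x j)^2 + 2 * (\<theta>s j)^2"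
        using zero_le_square[of "x j + \<theta>s j"] by (simp add: power2_eq_square algebra_simps)
    qed
    also have "\<dots> = 2 * (l2norm (ext0 p x))^2 + 2 * (\<Sum>j<p. (\<theta>s j)^2)"
      by (simp add: sum.distrib sum_distrib_left[symmetric] sum_sq_ext0)
    also have "\<dots> \<le> 2 * (1 + (l2norm (ext0 p x))^4) + 2 * c0^2"
    proof -
      have "(l2norm (ext0 p x))^2 \<le> 1 + (l2norm (ext0 p x))^4"
        using le_one_plus_sq[of "(l2norm (ext0 p x))^2"] by (simp add: power_mult[symmetric])
      then show ?thesis using ths2 by (smt (verit))
    qed
    finally have "(\<Sum>j<p. (x j - \<theta>s j)^2) \<le> 2 * (1 + (l2norm (ext0 p x))^4) + 2 * c0^2" .
    then have "(\<Sum>j<p. (x j - \<theta>s j)^2) * \<pi>n (ext0 p x) \<le> (2 * (1 + (l2norm (ext0 p x))^4) + 2 * c0^2) * \<pi>n (ext0 p x)"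
      using \<pi>pos by (rule mult_right_mono)
    then show ?thesis by (simp add: g_def algebra_simps)
  qed
  have "(\<integral>\<^sup>+ x. ennreal ((\<Sum>j<p. (x j - \<theta>s j)^2) * \<pi>n (ext0 p x)) \<partial>Leb p) \<le> (\<integral>\<^sup>+ x. ennreal (g x) \<partial>Leb p)"
    by (intro nn_integral_mono ennreal_leI pw)
  also have "\<dots> = ennreal (\<integral>x. g x \<partial>Leb p)"
    by (rule nn_integral_eq_integral[OF gi]) (auto simp: g_def intro!: add_nonneg_nonneg mult_nonneg_nonneg \<pi>pos)
  also have "(\<integral>x. g x \<partial>Leb p) = (2 + 2*c0^2) + 2 * (\<integral>x. (l2norm (ext0 p x))^4 * \<pi>n (ext0 p x) \<partial>Leb p)"
    unfolding g_def using \<pi>i f4 \<pi>1 by simp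
  also have "\<dots> \<le> 2 + 2*c0^2 + 2*\<bar>M\<bar>" using f4M by linarith
  finally show ?thesis by (simp add: ennreal_leI)
qed


lemma ind_meas_Bc:
  assumes "\<theta>s \<in> Rp p"
  shows "(\<lambda>x. indicator {\<theta>. a < l2norm (\<theta> - \<theta>s) powr \<beta>} (ext0 p x) :: real) \<in> borel_measurable (Leb p)"
proof -
  have eq: "(\<lambda>x. indicator {\<theta>. a < l2norm (\<theta> - \<theta>s) powr \<beta>} (ext0 p x) :: real)
      = (\<lambda>x. if a < (sqrt (\<Sum>j<p. (x j - \<theta>s j)^2)) powr \<beta> then 1 else 0)"
    using ind_ext0[OF assms, where Q="\<lambda>r. a < r powr \<beta>"] by simp
  have [measurable]: "(\<lambda>x. sqrt (\<Sum>j<p. (x j - \<theta>s j)^2)) \<in> borel_measurable (Leb p)"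
    by (rule r_meas)
  show ?thesis unfolding eq by measurable
qed

lemma ind_meas_B:
  assumes "\<theta>s \<in> Rp p"
  shows "(\<lambda>x. indicator {\<theta>. l2norm (\<theta> - \<theta>s) \<le> a} (ext0 p x) :: real) \<in> borel_measurable (Leb p)"
proof -
  have eq: "(\<lambda>x. indicator {\<theta>. l2norm (\<theta> - \<theta>s) \<le> a} (ext0 p x) :: real)
      = (\<lambda>x. if sqrt (\<Sum>j<p. (x j - \<theta>s j)^2) \<le> a then 1 else 0)"
    using ind_ext0[OF assms, where Q="\<lambda>r. r \<le> a"] by simp
  have [measurable]: "(\<lambda>x. sqrt (\<Sum>j<p. (x j - \<theta>s j)^2)) \<in> borel_measurable (Leb p)"
    by (rule r_meas)
  show ?thesis unfolding eq by measurable
qed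

lemma amgm_split:
  fixes r q t \<rho> a \<beta> i :: real
  assumes "0 \<le> r" "r = sqrt q" "0 \<le> q" "0 < t" "0 \<le> \<rho>" "\<beta> \<ge> 1" "0 < a" "\<rho> = a powr (1/\<beta>)"
    and "i = (if a < r powr \<beta> then 1 else 0)"
  shows "r \<le> \<rho> + t/2 * q + 1/(2*t) * i"
proof (cases "a < r powr \<beta>")
  case True
  have "0 \<le> (sqrt t * r - 1 / sqrt t)^2" by simp
  also have "(sqrt t * r - 1 / sqrt t)^2 = t * r^2 - 2 * r + 1/t"
    using assms(4) by (simp add: power2_eq_square field_simps real_sqrt_mult[symmetric])
  finally have "r \<le> t/2 * r^2 + 1/(2*t)" by (simp add: field_simps)
  have "r \<le> t/2 * q + 1/(2*t)" using \<open>r \<le> t/2 * r^2 + 1/(2*t)\<close> assms by simp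
  moreover have "0 \<le> \<rho>" using assms by simp
  moreover have "1/(2*t) * i = 1/(2*t)" using True assms by simp
  ultimately show ?thesis by linarith
next
  case False
  then have le: "r powr \<beta> \<le> a" by simp
  have "r \<le> \<rho>"
  proof (cases "r = 0")
    case True then show ?thesis using assms by simp
  next
    case False
    then have "r = (r powr \<beta>) powr (1/\<beta>)" using assms by (simp add: powr_powr)
    also have "\<dots> \<le> a powr (1/\<beta>)"
      using le assms by (intro powr_mono2) auto
    finally show ?thesis using assms by simp
  qed
  moreover have "0 \<le> t/2 * q" using assms by simp
  moreover have "1/(2*t) * i = 0" using False assms by simp
  ultimately show ?thesis by linarith
qed


lemma num_final:
  fixes C3 s M2 :: real
  assumes "0 < C3" "0 \<le> s" "ln M2 \<le> s" "1 \<le> M2"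
  shows "exp (- (C3 + 3) * s) / 2 * (exp (C3 * s) * exp s * M2) + 1 / (2 * exp (- (C3 + 3) * s)) * exp (- (2 * (C3 + 3)) * s) \<le> exp (-s)"
proof -
  have M2e: "M2 \<le> exp s" using assms by (metis exp_le_cancel_iff exp_ln less_le_trans zero_less_one)
  have e1: "exp (- (C3 + 3) * s) * (exp (C3 * s) * exp s) = exp (-s) * exp (-s)"
    by (simp add: exp_add[symmetric] algebra_simps)
  have "exp (- (C3 + 3) * s) / 2 * (exp (C3 * s) * exp s * M2) = exp (-s) * (exp (-s) * M2) / 2"
    using e1 by (simp add: algebra_simps)
  also have "exp (-s) * M2 \<le> exp (-s) * exp s" using M2e by simp
  then have "exp (-s) * (exp (-s) * M2) / 2 \<le> exp (-s) * (exp (-s) * exp s) / 2" by simp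
  also have "exp (-s) * (exp (-s) * exp s) / 2 = exp (-s) / 2" by (simp add: exp_minus)
  finally have t1: "exp (- (C3 + 3) * s) / 2 * (exp (C3 * s) * exp s * M2) \<le> exp (-s) / 2" .
  have "1 / (2 * exp (- (C3 + 3) * s)) * exp (- (2 * (C3 + 3)) * s) = exp (- (C3 + 3) * s) / 2"
    by (simp add: exp_minus field_simps exp_add[symmetric] algebra_simps)
  also have "\<dots> \<le> exp (-s) / 2"
  proof -
    have "0 \<le> C3 * s" using assms by simp
    then have "(- C3 - 3) * s \<le> - s" using assms by (simp add: algebra_simps; linarith)
    then show ?thesis by simp
  qed
  finally show ?thesis using t1 by linarith
qed

lemma pointwise:
  fixes \<pi>n :: "(nat \<Rightarrow> real) \<Rightarrow> real" and \<theta>s \<theta>0 :: "nat \<Rightarrow> real" and Z :: "nat \<Rightarrow> 'z"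
  assumes ths: "\<theta>s \<in> Rp p"
    and w_int: "integrable (Leb p) (\<lambda>x. lik dens n (ext0 p x) Z * \<pi>n (ext0 p x))"
    and Dpos: "0 < post_norm dens \<pi>n n p Z"
    and xint: "\<forall>j. integrable (Leb p) (\<lambda>x. ext0 p x j * lik dens n (ext0 p x) Z * \<pi>n (ext0 p x))"
    and wnn: "\<And>x. 0 \<le> lik dens n (ext0 p x) Z * \<pi>n (ext0 p x)"
    and l0nn: "0 \<le> lik dens n \<theta>0 Z"
    and beta: "\<beta> \<ge> 1" and L1: "0 < L1" and dpos: "0 < \<delta>" and C3: "0 < C3" and M2: "1 \<le> M2"
    and s0: "0 \<le> s" and sT: "ln M2 \<le> s"
    and b1: "post_prob dens \<pi>n n p Z {\<theta>. l2norm (\<theta> - \<theta>s) powr \<beta> > L1 * \<delta>} < exp (- (2 * (C3 + 3)) * s)"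
    and b2: "exp (- C3 * s) < (\<integral>x. indicator {\<theta>. l2norm (\<theta> - \<theta>s) \<le> \<delta>} (ext0 p x)
                   * (lik dens n (ext0 p x) Z / lik dens n \<theta>0 Z) * \<pi>n (ext0 p x) \<partial>Leb p)"
    and b3: "(\<integral>\<^sup>+ x. ennreal (((\<Sum>j<p. (x j - \<theta>s j)^2) * \<pi>n (ext0 p x))
                   * (lik dens n (ext0 p x) Z / lik dens n \<theta>0 Z)) \<partial>Leb p) < ennreal (exp s * M2)"
  shows "l2norm (post_mean dens \<pi>n n p Z - \<theta>s) \<le> (L1 * \<delta>) powr (1/\<beta>) + exp (- s)"
proof -
  define w where "w = (\<lambda>x. lik dens n (ext0 p x) Z * \<pi>n (ext0 p x))"
  define D where "D = (\<integral>x. w x \<partial>Leb p)"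
  define l0 where "l0 = lik dens n \<theta>0 Z"
  define q where "q = (\<lambda>x. \<Sum>j<p. (x j - \<theta>s j)^2)"
  define r where "r = (\<lambda>x. sqrt (q x))"
  define \<rho> where "\<rho> = (L1 * \<delta>) powr (1/\<beta>)"
  define t where "t = exp (- (C3 + 3) * s)"
  define Bc where "Bc = {\<theta>. l2norm (\<theta> - \<theta>s) powr \<beta> > L1 * \<delta>}"
  define ib where "ib = (\<lambda>x. indicator Bc (ext0 p x) :: real)"
  have wi: "integrable (Leb p) w" using w_int by (simp add: w_def)
  have wm[measurable]: "w \<in> borel_measurable (Leb p)" using borel_measurable_integrable[OF wi] .
  have wn: "\<And>x. 0 \<le> w x" using wnn by (simp add: w_def)
  have DD: "D = post_norm dens \<pi>n n p Z" by (simp add: D_def w_def post_norm_def)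
  have Dp: "0 < D" using Dpos DD by simp
  have xi: "integrable (Leb p) (\<lambda>x. x j * w x)" if "j < p" for j
  proof -
    have "(\<lambda>x. ext0 p x j * lik dens n (ext0 p x) Z * \<pi>n (ext0 p x)) = (\<lambda>x. x j * w x)"
      using that by (simp add: ext0_def w_def fun_eq_iff)
    then show ?thesis using xint[rule_format, of j] by simp
  qed
  note vb = vec_mean_bound[OF wi _ Dp[unfolded D_def] xi, of \<theta>s, OF wn]
  have ri: "integrable (Leb p) (\<lambda>x. r x * w x)" using vb(1) by (simp add: r_def q_def)
  have pm: "l2norm (post_mean dens \<pi>n n p Z - \<theta>s) = sqrt (\<Sum>j<p. ((\<integral>x. x j * w x \<partial>Leb p) / D - \<theta>s j)^2)"
  proof -
    have "l2norm (post_mean dens \<pi>n n p Z - \<theta>s) = sqrt (\<Sum>j<p. ((post_mean dens \<pi>n n p Z - \<theta>s) j)^2)"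
      by (rule l2norm_fin) (use ths in \<open>auto simp: Rp_def post_mean_def ext0_def\<close>)
    also have "(\<Sum>j<p. ((post_mean dens \<pi>n n p Z - \<theta>s) j)^2) = (\<Sum>j<p. ((\<integral>x. x j * w x \<partial>Leb p) / D - \<theta>s j)^2)"
    proof (rule sum.cong)
      fix j assume "j \<in> {..<p}"
      then have "(\<lambda>x. ext0 p x j * lik dens n (ext0 p x) Z * \<pi>n (ext0 p x)) = (\<lambda>x. x j * w x)"
        by (auto simp: ext0_def w_def fun_eq_iff)
      then show "((post_mean dens \<pi>n n p Z - \<theta>s) j)^2 = ((\<integral>x. x j * w x \<partial>Leb p) / D - \<theta>s j)^2"
        by (simp add: post_mean_def DD)
    qed simp
    finally show ?thesis .
  qed
  have main1: "l2norm (post_mean dens \<pi>n n p Z - \<theta>s) \<le> (\<integral>x. r x * w x \<partial>Leb p) / D"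
    using vb(2) pm by (simp add: r_def q_def D_def)
  have l0p: "0 < l0"
  proof (rule ccontr)
    assume "\<not> 0 < l0"
    then have "l0 = 0" using l0nn by (simp add: l0_def)
    then have "(\<integral>x. indicator {\<theta>. l2norm (\<theta> - \<theta>s) \<le> \<delta>} (ext0 p x)
                   * (lik dens n (ext0 p x) Z / lik dens n \<theta>0 Z) * \<pi>n (ext0 p x) \<partial>Leb p) = 0"
      by (simp add: l0_def)
    then show False using b2 by (metis exp_gt_zero less_asym)
  qed
  have IB: "(\<integral>x. indicator {\<theta>. l2norm (\<theta> - \<theta>s) \<le> \<delta>} (ext0 p x)
                   * (lik dens n (ext0 p x) Z / lik dens n \<theta>0 Z) * \<pi>n (ext0 p x) \<partial>Leb p)
        = (\<integral>x. indicator {\<theta>. l2norm (\<theta> - \<theta>s) \<le> \<delta>} (ext0 p x) * w x \<partial>Leb p) / l0"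
    by (simp add: l0_def w_def mult.assoc)
  have IBD: "(\<integral>x. indicator {\<theta>. l2norm (\<theta> - \<theta>s) \<le> \<delta>} (ext0 p x) * w x \<partial>Leb p) \<le> D"
  proof (cases "integrable (Leb p) (\<lambda>x. indicator {\<theta>. l2norm (\<theta> - \<theta>s) \<le> \<delta>} (ext0 p x) * w x)")
    case True
    show ?thesis unfolding D_def
      by (rule integral_mono[OF True wi]) (auto simp: wn indicator_def)
  next
    case False
    then show ?thesis using Dp by (simp add: not_integrable_integral_eq)
  qed
  have l0D: "l0 < D * exp (C3 * s)"
  proof -
    have "exp (- C3 * s) < D / l0" using b2 IB IBD l0p
      by (metis divide_right_mono less_le_trans less_imp_le)
    then have "exp (- C3 * s) * l0 < D" using l0p by (simp add: field_simps)
    then have X: "exp (- C3 * s) * l0 * exp (C3 * s) < D * exp (C3 * s)" by simp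
    have Y: "exp (- C3 * s) * l0 * exp (C3 * s) = l0"
      by (simp add: exp_minus field_simps)
    show ?thesis using X unfolding Y .
  qed
  have qm[measurable]: "q \<in> borel_measurable (Leb p)" unfolding q_def by (rule q_meas)
  have qn: "\<And>x. 0 \<le> q x" by (simp add: q_def sum_nonneg)
  have eqf: "\<And>x. ennreal (q x * w x) = ennreal l0 * ennreal ((q x * \<pi>n (ext0 p x)) * (lik dens n (ext0 p x) Z / lik dens n \<theta>0 Z))"
  proof -
    fix x
    have "q x * w x = l0 * ((q x * \<pi>n (ext0 p x)) * (lik dens n (ext0 p x) Z / lik dens n \<theta>0 Z))"
      using l0p by (simp add: w_def l0_def field_simps)
    then show "ennreal (q x * w x) = ennreal l0 * ennreal ((q x * \<pi>n (ext0 p x)) * (lik dens n (ext0 p x) Z / lik dens n \<theta>0 Z))"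
      unfolding \<open>q x * w x = _\<close> using l0p by (intro ennreal_mult') auto
  qed
  have mm: "(\<lambda>x. ennreal ((q x * \<pi>n (ext0 p x)) * (lik dens n (ext0 p x) Z / lik dens n \<theta>0 Z))) \<in> borel_measurable (Leb p)"
  proof -
    have "(\<lambda>x. ennreal ((q x * \<pi>n (ext0 p x)) * (lik dens n (ext0 p x) Z / lik dens n \<theta>0 Z)))
        = (\<lambda>x. ennreal (q x * w x / l0))"
      by (auto simp: w_def l0_def fun_eq_iff field_simps)
    moreover have "(\<lambda>x. ennreal (q x * w x / l0)) \<in> borel_measurable (Leb p)" by measurable
    ultimately show ?thesis by simp
  qed
  have NN: "(\<integral>\<^sup>+ x. ennreal (q x * w x) \<partial>Leb p) \<le> ennreal (l0 * (exp s * M2))"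
  proof -
    have "(\<integral>\<^sup>+ x. ennreal (q x * w x) \<partial>Leb p)
        = ennreal l0 * (\<integral>\<^sup>+ x. ennreal ((q x * \<pi>n (ext0 p x)) * (lik dens n (ext0 p x) Z / lik dens n \<theta>0 Z)) \<partial>Leb p)"
      unfolding eqf by (rule nn_integral_cmult[OF mm])
    also have "\<dots> \<le> ennreal l0 * ennreal (exp s * M2)"
      using b3 by (intro mult_left_mono) (auto simp: q_def)
    also have "\<dots> = ennreal (l0 * (exp s * M2))" using l0p by (simp add: ennreal_mult')
    finally show ?thesis .
  qed
  have qwi: "integrable (Leb p) (\<lambda>x. q x * w x)"
    by (rule integrableI_nonneg) (use NN wn qn in \<open>auto intro!: le_less_trans[OF NN]\<close>)
  have qwb: "(\<integral>x. q x * w x \<partial>Leb p) \<le> l0 * (exp s * M2)"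
  proof -
    have "ennreal (\<integral>x. q x * w x \<partial>Leb p) = (\<integral>\<^sup>+ x. ennreal (q x * w x) \<partial>Leb p)"
      by (rule nn_integral_eq_integral[OF qwi, symmetric]) (auto simp: wn qn)
    then have "ennreal (\<integral>x. q x * w x \<partial>Leb p) \<le> ennreal (l0 * (exp s * M2))" using NN by simp
    then show ?thesis using l0p M2 by (subst (asm) ennreal_le_iff) auto
  qed
  have ibm: "ib \<in> borel_measurable (Leb p)"
    unfolding ib_def Bc_def using ind_meas_Bc[OF ths, of "L1 * \<delta>" \<beta>] by simp
  have ibwi: "integrable (Leb p) (\<lambda>x. ib x * w x)"
    by (rule Bochner_Integration.integrable_bound[OF wi]) (use ibm in \<open>auto simp: ib_def indicator_def wn\<close>)
  have ppeq: "post_prob dens \<pi>n n p Z Bc = (\<integral>x. ib x * w x \<partial>Leb p) / D"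
    by (simp add: post_prob_def DD ib_def w_def mult.assoc)
  have tpos: "0 < t" by (simp add: t_def)
  have rho0: "0 \<le> \<rho>" by (simp add: \<rho>_def)
  have pw: "r x * w x \<le> \<rho> * w x + t/2 * (q x * w x) + 1/(2*t) * (ib x * w x)" for x
  proof -
    have ibx: "ib x = (if L1 * \<delta> < r x powr \<beta> then 1 else 0)"
      using ind_ext0[OF ths, where Q="\<lambda>r. L1 * \<delta> < r powr \<beta>", of x]
      by (simp add: ib_def Bc_def r_def q_def)
    have "r x \<le> \<rho> + t/2 * q x + 1/(2*t) * ib x"
      by (rule amgm_split[where a="L1 * \<delta>" and \<beta>=\<beta>])
        (use qn tpos beta L1 dpos ibx in \<open>auto simp: r_def \<rho>_def\<close>)
    then have "r x * w x \<le> (\<rho> + t/2 * q x + 1/(2*t) * ib x) * w x"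
      using wn by (rule mult_right_mono)
    then show ?thesis by (simp add: algebra_simps)
  qed
  have "(\<integral>x. r x * w x \<partial>Leb p) \<le> (\<integral>x. \<rho> * w x + t/2 * (q x * w x) + 1/(2*t) * (ib x * w x) \<partial>Leb p)"
    by (rule integral_mono) (use ri wi qwi ibwi pw in auto)
  also have "\<dots> = \<rho> * D + t/2 * (\<integral>x. q x * w x \<partial>Leb p) + 1/(2*t) * (\<integral>x. ib x * w x \<partial>Leb p)"
    using wi qwi ibwi by (simp add: D_def)
  finally have "(\<integral>x. r x * w x \<partial>Leb p) / D
      \<le> (\<rho> * D + t/2 * (\<integral>x. q x * w x \<partial>Leb p) + 1/(2*t) * (\<integral>x. ib x * w x \<partial>Leb p)) / D"
    using Dp by (simp add: divide_right_mono)
  also have "\<dots> = \<rho> + t/2 * ((\<integral>x. q x * w x \<partial>Leb p) / D) + 1/(2*t) * post_prob dens \<pi>n n p Z Bc"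
    using Dp by (simp add: ppeq field_simps)
  also have "\<dots> \<le> \<rho> + t/2 * (exp (C3 * s) * exp s * M2) + 1/(2*t) * exp (- (2 * (C3 + 3)) * s)"
  proof -
    have "(\<integral>x. q x * w x \<partial>Leb p) / D \<le> l0 * (exp s * M2) / D"
      using qwb Dp by (simp add: divide_right_mono)
    also have "\<dots> \<le> D * exp (C3 * s) * (exp s * M2) / D"
      using l0D M2 Dp by (intro divide_right_mono mult_right_mono) auto
    also have "\<dots> = exp (C3 * s) * exp s * M2" using Dp by simp
    finally have A1: "(\<integral>x. q x * w x \<partial>Leb p) / D \<le> exp (C3 * s) * exp s * M2" .
    have A2: "post_prob dens \<pi>n n p Z Bc \<le> exp (- (2 * (C3 + 3)) * s)"
      using b1 by (simp add: Bc_def)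
    show ?thesis using A1 A2 tpos
      by (intro add_mono mult_left_mono order.refl) auto
  qed
  also have "\<dots> \<le> \<rho> + exp (- s)"
    using num_final[OF C3 s0 sT M2] by (simp add: t_def)
  finally show ?thesis using main1 by (simp add: \<rho>_def)
qed


lemma joint_meas_post:
  assumes dj: "(\<lambda>(x, z). dens (ext0 p x) z) \<in> borel_measurable (Leb p \<Otimes>\<^sub>M \<nu>)"
    and \<pi>m: "(\<lambda>x. \<pi>n (ext0 p x)) \<in> borel_measurable (Leb p)"
    and hm: "h \<in> borel_measurable (Leb p)"
    and d0m: "dens \<theta>0 \<in> borel_measurable \<nu>"
  shows "(\<lambda>(Z, x). h x * lik dens n (ext0 p x) Z * \<pi>n (ext0 p x)) \<in> borel_measurable (sample \<nu> dens \<theta>0 n \<Otimes>\<^sub>M Leb p)"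
    and "(\<lambda>(Z, x). h x * (lik dens n (ext0 p x) Z / lik dens n \<theta>0 Z) * \<pi>n (ext0 p x)) \<in> borel_measurable (sample \<nu> dens \<theta>0 n \<Otimes>\<^sub>M Leb p)"
    and "(\<lambda>(Z, x). lik dens n (ext0 p x) Z * \<pi>n (ext0 p x)) \<in> borel_measurable (sample \<nu> dens \<theta>0 n \<Otimes>\<^sub>M Leb p)"
proof -
  let ?P = "sample \<nu> dens \<theta>0 n"
  have lj: "(\<lambda>Zx. lik dens n (ext0 p (snd Zx)) (fst Zx)) \<in> borel_measurable (?P \<Otimes>\<^sub>M Leb p)"
    using lik_joint_meas[OF dj, of n \<theta>0] by (simp add: case_prod_beta')
  have l0: "(\<lambda>Zx. lik dens n \<theta>0 (fst Zx)) \<in> borel_measurable (?P \<Otimes>\<^sub>M Leb p)"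
    by (rule measurable_compose[OF measurable_fst lik0_meas[of dens \<theta>0 \<nu> n \<theta>0, OF d0m]])
  have hj: "(\<lambda>Zx. h (snd Zx)) \<in> borel_measurable (?P \<Otimes>\<^sub>M Leb p)"
    by (rule measurable_compose[OF measurable_snd hm])
  have pj: "(\<lambda>Zx. \<pi>n (ext0 p (snd Zx))) \<in> borel_measurable (?P \<Otimes>\<^sub>M Leb p)"
    by (rule measurable_compose[OF measurable_snd \<pi>m])
  have "(\<lambda>Zx. h (snd Zx) * lik dens n (ext0 p (snd Zx)) (fst Zx) * \<pi>n (ext0 p (snd Zx))) \<in> borel_measurable (?P \<Otimes>\<^sub>M Leb p)"
    by (intro borel_measurable_times hj lj pj)
  then show "(\<lambda>(Z, x). h x * lik dens n (ext0 p x) Z * \<pi>n (ext0 p x)) \<in> borel_measurable (?P \<Otimes>\<^sub>M Leb p)"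
    by (simp add: case_prod_beta')
  have "(\<lambda>Zx. h (snd Zx) * (lik dens n (ext0 p (snd Zx)) (fst Zx) / lik dens n \<theta>0 (fst Zx)) * \<pi>n (ext0 p (snd Zx))) \<in> borel_measurable (?P \<Otimes>\<^sub>M Leb p)"
    by (intro borel_measurable_times borel_measurable_divide hj lj pj l0)
  then show "(\<lambda>(Z, x). h x * (lik dens n (ext0 p x) Z / lik dens n \<theta>0 Z) * \<pi>n (ext0 p x)) \<in> borel_measurable (?P \<Otimes>\<^sub>M Leb p)"
    by (simp add: case_prod_beta')
  have "(\<lambda>Zx. lik dens n (ext0 p (snd Zx)) (fst Zx) * \<pi>n (ext0 p (snd Zx))) \<in> borel_measurable (?P \<Otimes>\<^sub>M Leb p)"
    by (intro borel_measurable_times lj pj)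
  then show "(\<lambda>(Z, x). lik dens n (ext0 p x) Z * \<pi>n (ext0 p x)) \<in> borel_measurable (?P \<Otimes>\<^sub>M Leb p)"
    by (simp add: case_prod_beta')
qed

lemma int_meas:
  fixes f :: "'a \<Rightarrow> (nat \<Rightarrow> real) \<Rightarrow> real"
  assumes "case_prod f \<in> borel_measurable (N \<Otimes>\<^sub>M Leb p)"
  shows "(\<lambda>Z. \<integral>x. f Z x \<partial>Leb p) \<in> borel_measurable N"
  by (rule sigma_finite_measure.borel_measurable_lebesgue_integral[OF Leb_sigma_finite assms])

lemma nnint_meas:
  assumes "case_prod f \<in> borel_measurable (N \<Otimes>\<^sub>M Leb p)"
  shows "(\<lambda>Z. \<integral>\<^sup>+x. f Z x \<partial>Leb p) \<in> borel_measurable N"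
  by (rule sigma_finite_measure.borel_measurable_nn_integral[OF Leb_sigma_finite assms])

lemma lik_nonneg:
  assumes "\<And>z. z \<in> space \<nu> \<Longrightarrow> 0 \<le> dens \<theta> z" and "Z \<in> space (sample \<nu> dens \<theta>0 n)"
  shows "0 \<le> lik dens n \<theta> Z"
  using assms by (auto simp: lik_def sample_def space_PiM intro!: prod_nonneg)


theorem lemma5p6:
  fixes \<Theta> :: "(nat \<Rightarrow> real) set"
    and \<nu> :: "'z measure"
    and dens :: "(nat \<Rightarrow> real) \<Rightarrow> 'z \<Rightarrow> real"
    and \<theta>0 :: "nat \<Rightarrow> real"
    and p :: "nat \<Rightarrow> nat"
    and \<pi> :: "nat \<Rightarrow> (nat \<Rightarrow> real) \<Rightarrow> real"
    and grad :: "nat \<Rightarrow> (nat \<Rightarrow> real) \<Rightarrow> nat \<Rightarrow> real"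
    and c0 \<beta> m\<pi> \<Lambda>\<pi> :: real
    and \<theta>star :: "nat \<Rightarrow> nat \<Rightarrow> real"
    and \<delta> :: "nat \<Rightarrow> real"
  assumes Theta_l2: "\<Theta> \<subseteq> l2seq"
    and Rp_Theta: "\<And>n. Rp (p n) \<subseteq> \<Theta>"
    and theta0: "\<theta>0 \<in> \<Theta>"
    and dens_nonneg: "\<And>\<theta> z. \<theta> \<in> \<Theta> \<Longrightarrow> z \<in> space \<nu> \<Longrightarrow> 0 \<le> dens \<theta> z"
    and dens_meas: "\<And>\<theta>. \<theta> \<in> \<Theta> \<Longrightarrow> dens \<theta> \<in> borel_measurable \<nu>"
    and dens_prob: "\<And>\<theta>. \<theta> \<in> \<Theta> \<Longrightarrow> prob_space (density \<nu> (dens \<theta>))"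
    and dens_joint: "\<And>n. (\<lambda>(x, z). dens (ext0 (p n) x) z) \<in> borel_measurable (Leb (p n) \<Otimes>\<^sub>M \<nu>)"
    and post_welldef: "\<And>n. AE Z in sample \<nu> dens \<theta>0 n.
         0 < post_norm dens (\<pi> n) n (p n) Z
       \<and> integrable (Leb (p n)) (\<lambda>x. lik dens n (ext0 (p n) x) Z * \<pi> n (ext0 (p n) x))
       \<and> (\<forall>j. integrable (Leb (p n)) (\<lambda>x. ext0 (p n) x j * lik dens n (ext0 (p n) x) Z * \<pi> n (ext0 (p n) x)))"
    \<comment> \<open>Assumption (A)\<close>
    and c0_pos: "c0 > 0"
    and thstar_Rp: "\<And>n. \<theta>star n \<in> Rp (p n)"
    and thstar_bd: "\<And>n. l2norm (\<theta>star n) \<le> c0"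
    and delta_pos: "\<And>n. 0 < \<delta> n"
    and delta_lim: "\<delta> \<longlonglongrightarrow> 0"
    and beta_ge: "\<beta> \<ge> 1"
    and A: "\<And>c. c > 0 \<Longrightarrow> \<exists>L0. \<forall>L\<ge>L0. \<exists>C1>0. \<exists>C2>0. \<exists>C3>0. \<exists>C4>0. \<forall>n.
         measure (sample \<nu> dens \<theta>0 n)
           {Z \<in> space (sample \<nu> dens \<theta>0 n).
              post_prob dens (\<pi> n) n (p n) Z {\<theta>. l2norm (\<theta> - \<theta>star n) powr \<beta> > L * \<delta> n}
                \<ge> exp (- c * n * (\<delta> n)^2)}
           \<le> C2 * exp (- C1 * n * (\<delta> n)^2)
       \<and> measure (sample \<nu> dens \<theta>0 n)
           {Z \<in> space (sample \<nu> dens \<theta>0 n).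
              (\<integral>x. indicator {\<theta>. l2norm (\<theta> - \<theta>star n) \<le> \<delta> n} (ext0 (p n) x)
                   * (lik dens n (ext0 (p n) x) Z / lik dens n \<theta>0 Z) * \<pi> n (ext0 (p n) x) \<partial>Leb (p n))
                \<le> exp (- C3 * n * (\<delta> n)^2)}
           \<le> exp (- C4 * n * (\<delta> n)^2)"
    \<comment> \<open>Assumption (B)\<close>
    and prior_pos: "\<And>n \<theta>. \<theta> \<in> Rp (p n) \<Longrightarrow> 0 < \<pi> n \<theta>"
    and prior_meas: "\<And>n. (\<lambda>x. \<pi> n (ext0 (p n) x)) \<in> borel_measurable (Leb (p n))"
    and prior_prob: "\<And>n. integrable (Leb (p n)) (\<lambda>x. \<pi> n (ext0 (p n) x))
                        \<and> (\<integral>x. \<pi> n (ext0 (p n) x) \<partial>Leb (p n)) = 1"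
    and grad_deriv: "\<And>n \<theta> i. \<theta> \<in> Rp (p n) \<Longrightarrow> i < p n \<Longrightarrow>
         ((\<lambda>t. ln (\<pi> n (\<theta>(i := \<theta> i + t)))) has_real_derivative grad n \<theta> i) (at 0)"
    and m_pos: "m\<pi> > 0"
    and strong_conc: "\<And>n \<theta> \<theta>'. \<theta> \<in> Rp (p n) \<Longrightarrow> \<theta>' \<in> Rp (p n) \<Longrightarrow>
         ln (\<pi> n \<theta>') \<le> ln (\<pi> n \<theta>) + (\<Sum>i<p n. (\<theta>' i - \<theta> i) * grad n \<theta> i)
                          - m\<pi> / 2 * (l2norm (\<theta> - \<theta>'))^2"
    and Lambda_pos: "\<Lambda>\<pi> > 0"
    and grad_lip: "\<And>n \<theta> \<theta>'. \<theta> \<in> Rp (p n) \<Longrightarrow> \<theta>' \<in> Rp (p n) \<Longrightarrow>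
         sqrt (\<Sum>i<p n. (grad n \<theta> i - grad n \<theta>' i)^2) \<le> \<Lambda>\<pi> * l2norm (\<theta> - \<theta>')"
    and prior_max: "\<And>n. \<exists>\<theta>m\<in>Rp (p n). (\<forall>\<theta>\<in>Rp (p n). ln (\<pi> n \<theta>) \<le> ln (\<pi> n \<theta>m)) \<and> l2norm \<theta>m \<le> c0"
    and fourth_mom: "\<exists>M. \<forall>n. integrable (Leb (p n)) (\<lambda>x. (l2norm (ext0 (p n) x))^4 * \<pi> n (ext0 (p n) x))
                        \<and> (\<integral>x. (l2norm (ext0 (p n) x))^4 * \<pi> n (ext0 (p n) x) \<partial>Leb (p n)) \<le> M"
    \<comment> \<open>Additional hypothesis of the lemma\<close>
    and close: "\<And>n. l2norm (\<theta>0 - \<theta>star n) \<le> c0 * (\<delta> n) powr (1 / \<beta>)"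
  shows "\<exists>c>0. \<exists>c'>0. \<exists>L0. \<forall>L\<ge>L0. \<forall>n.
           measure (sample \<nu> dens \<theta>0 n)
             {Z \<in> space (sample \<nu> dens \<theta>0 n).
                l2norm (post_mean dens (\<pi> n) n (p n) Z - \<theta>0)
                  > exp (- n * (\<delta> n)^2) + L powr (1 / \<beta>) * (\<delta> n) powr (1 / \<beta>)}
           \<le> c' * exp (- c * n * (\<delta> n)^2)"
proof -
  define P where "P n = sample \<nu> dens \<theta>0 n" for n
  define B1 where "B1 c L n = {Z \<in> space (P n).
              post_prob dens (\<pi> n) n (p n) Z {\<theta>. l2norm (\<theta> - \<theta>star n) powr \<beta> > L * \<delta> n}
                \<ge> exp (- c * n * (\<delta> n)^2)}" for c L n
  define B2 where "B2 C3 n = {Z \<in> space (P n).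
              (\<integral>x. indicator {\<theta>. l2norm (\<theta> - \<theta>star n) \<le> \<delta> n} (ext0 (p n) x)
                   * (lik dens n (ext0 (p n) x) Z / lik dens n \<theta>0 Z) * \<pi> n (ext0 (p n) x) \<partial>Leb (p n))
                \<le> exp (- C3 * n * (\<delta> n)^2)}" for C3 n
  have A': "\<And>c. c > 0 \<Longrightarrow> \<exists>L0. \<forall>L\<ge>L0. \<exists>C1>0. \<exists>C2>0. \<exists>C3>0. \<exists>C4>0. \<forall>n.
         measure (P n) (B1 c L n) \<le> C2 * exp (- C1 * n * (\<delta> n)^2)
       \<and> measure (P n) (B2 C3 n) \<le> exp (- C4 * n * (\<delta> n)^2)"
    unfolding B1_def B2_def P_def by (rule A)
  obtain M where M: "\<And>n. integrable (Leb (p n)) (\<lambda>x. (l2norm (ext0 (p n) x))^4 * \<pi> n (ext0 (p n) x))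
                        \<and> (\<integral>x. (l2norm (ext0 (p n) x))^4 * \<pi> n (ext0 (p n) x) \<partial>Leb (p n)) \<le> M"
    using fourth_mom by blast
  define M2 where "M2 = 2 + 2*c0^2 + 2*\<bar>M\<bar>"
  have M2: "1 \<le> M2" unfolding M2_def using zero_le_power2[of c0] abs_ge_zero[of M] by linarith
  have ThR: "\<And>n x. ext0 (p n) x \<in> \<Theta>" using Rp_Theta ext0_Rp by blast
  obtain La where hLa: "\<forall>L\<ge>La. \<exists>C1>0. \<exists>C2>0. \<exists>C3>0. \<exists>C4>0. \<forall>n.
         measure (P n) (B1 1 L n) \<le> C2 * exp (- C1 * n * (\<delta> n)^2)
       \<and> measure (P n) (B2 C3 n) \<le> exp (- C4 * n * (\<delta> n)^2)"
    using A'[of 1] by auto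
  then obtain C3 C4 where C3: "C3 > 0" and C4: "C4 > 0"
    and A2: "\<And>n. measure (P n) (B2 C3 n) \<le> exp (- C4 * n * (\<delta> n)^2)"
    by blast
  define K where "K = 2 * (C3 + 3)"
  have Kpos: "K > 0" using C3 by (simp add: K_def)
  obtain Lb where hLb: "\<forall>L\<ge>Lb. \<exists>C1>0. \<exists>C2>0. \<exists>C3>0. \<exists>C4>0. \<forall>n.
         measure (P n) (B1 K L n) \<le> C2 * exp (- C1 * n * (\<delta> n)^2)
       \<and> measure (P n) (B2 C3 n) \<le> exp (- C4 * n * (\<delta> n)^2)"
    using A'[OF Kpos] by auto
  define L1 where "L1 = max Lb 1"
  have L1: "L1 \<ge> Lb" "0 < L1" by (auto simp: L1_def)
  obtain C1 C2 where C1: "C1 > 0" and C2: "C2 > 0"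
    and A1: "\<And>n. measure (P n) (B1 K L1 n) \<le> C2 * exp (- C1 * n * (\<delta> n)^2)"
    using hLb L1(1) by blast
  define L0 where "L0 = (L1 powr (1/\<beta>) + c0) powr \<beta>"
  define c where "c = min (min C1 C4) 1"
  define T where "T = ln M2"
  define c' where "c' = max (C2 + 2) (exp (c * T))"
  have cpos: "c > 0" using C1 C4 by (simp add: c_def)
  have c'pos: "c' > 0" using C2 by (simp add: c'_def)
  show ?thesis
  proof (rule exI[of _ c], intro conjI cpos, rule exI[of _ c'], intro conjI c'pos, rule exI[of _ L0], intro allI impI)
    fix L :: real and n :: nat
    assume LL0: "L \<ge> L0"
    define s where "s = real n * (\<delta> n)^2"
    have s0: "0 \<le> s" by (simp add: s_def)
    define S where "S = {Z \<in> space (sample \<nu> dens \<theta>0 n).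
                l2norm (post_mean dens (\<pi> n) n (p n) Z - \<theta>0)
                  > exp (- real n * (\<delta> n)^2) + L powr (1 / \<beta>) * (\<delta> n) powr (1 / \<beta>)}"
    have Pprob: "prob_space (P n)"
      unfolding P_def sample_def by (rule prob_space_PiM) (use dens_prob theta0 in auto)
    interpret Pn: prob_space "P n" by (rule Pprob)
    have ex: "exp (- x * real n * (\<delta> n)^2) = exp (- x * s)" for x
      by (simp add: s_def mult.assoc)
    have goal_rhs: "c' * exp (- c * real n * (\<delta> n)^2) = c' * exp (- c * s)" by (simp only: ex)
    have main: "measure (sample \<nu> dens \<theta>0 n) S \<le> c' * exp (- c * real n * (\<delta> n)^2)"
    proof (cases "s < T")
      case True
      have "1 \<le> exp (c * T) * exp (- c * s)"
        using True cpos by (simp add: exp_add[symmetric] algebra_simps)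
      also have "\<dots> \<le> c' * exp (- c * s)" by (simp add: c'_def)
      finally have one: "1 \<le> c' * exp (- c * s)" .
      have m1: "measure (sample \<nu> dens \<theta>0 n) S \<le> 1" using Pn.prob_le_1[of S] by (simp add: P_def)
      show ?thesis unfolding goal_rhs using m1 one by linarith
    next
      case False
      then have sT: "ln M2 \<le> s" by (simp add: T_def)
      have d0m: "dens \<theta>0 \<in> borel_measurable \<nu>" by (rule dens_meas[OF theta0])
      have d0n: "\<And>z. z \<in> space \<nu> \<Longrightarrow> 0 \<le> dens \<theta>0 z" by (rule dens_nonneg[OF theta0])
      have d0p: "prob_space (density \<nu> (dens \<theta>0))" by (rule dens_prob[OF theta0])
      have dm: "\<And>x. dens (ext0 (p n) x) \<in> borel_measurable \<nu>" by (rule dens_meas[OF ThR])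
      have dn: "\<And>x z. z \<in> space \<nu> \<Longrightarrow> 0 \<le> dens (ext0 (p n) x) z" by (rule dens_nonneg[OF ThR])
      have dp: "\<And>x. prob_space (density \<nu> (dens (ext0 (p n) x)))" by (rule dens_prob[OF ThR])
      have \<pi>pos: "\<And>x. 0 < \<pi> n (ext0 (p n) x)" by (rule prior_pos[OF ext0_Rp])
      have ths: "\<theta>star n \<in> Rp (p n)" by (rule thstar_Rp)
      have \<pi>m[measurable]: "(\<lambda>x. \<pi> n (ext0 (p n) x)) \<in> borel_measurable (Leb (p n))" by (rule prior_meas)
      define g where "g x = (\<Sum>j<p n. (x j - \<theta>star n j)^2) * \<pi> n (ext0 (p n) x)" for x
      have gm: "g \<in> borel_measurable (Leb (p n))"
      proof -
        have [measurable]: "(\<lambda>x. \<Sum>j<p n. (x j - \<theta>star n j)^2) \<in> borel_measurable (Leb (p n))" by (rule q_meas)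
        show ?thesis unfolding g_def[abs_def] by measurable
      qed
      have gn: "\<And>x. 0 \<le> g x" using \<pi>pos by (simp add: g_def sum_nonneg less_imp_le)
      define Nf where "Nf Z = (\<integral>\<^sup>+ x. ennreal (g x * (lik dens n (ext0 (p n) x) Z / lik dens n \<theta>0 Z)) \<partial>Leb (p n))" for Z
      define B3 where "B3 = {Z \<in> space (P n). 1 \<le> ennreal (1 / (exp s * M2)) * Nf Z}"
      have eri1: "(\<lambda>(Z, x). ennreal (g x * (lik dens n (ext0 (p n) x) Z / lik dens n \<theta>0 Z)))
           \<in> borel_measurable (sample \<nu> dens \<theta>0 n \<Otimes>\<^sub>M Leb (p n))"
        by (rule exp_ratio_int(1)) (use dm dn dp d0m d0n d0p dens_joint gm gn in auto)
      have eri2: "(\<integral>\<^sup>+ Z. (\<integral>\<^sup>+ x. ennreal (g x * (lik dens n (ext0 (p n) x) Z / lik dens n \<theta>0 Z)) \<partial>Leb (p n)) \<partial>sample \<nu> dens \<theta>0 n)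
         \<le> (\<integral>\<^sup>+ x. ennreal (g x) \<partial>Leb (p n))"
        by (rule exp_ratio_int(2)) (use dm dn dp d0m d0n d0p dens_joint gm gn in auto)
      have Nfm[measurable]: "Nf \<in> borel_measurable (P n)"
        unfolding Nf_def[abs_def] P_def by (rule nnint_meas[OF eri1])
      have B3s: "B3 \<in> sets (P n)" unfolding B3_def by measurable
      have ibc_m: "(\<lambda>x. indicator {\<theta>. l2norm (\<theta> - \<theta>star n) powr \<beta> > L1 * \<delta> n} (ext0 (p n) x) :: real) \<in> borel_measurable (Leb (p n))"
        using ind_meas_Bc[OF ths, of "L1 * \<delta> n" \<beta>] by simp
      have ib_m: "(\<lambda>x. indicator {\<theta>. l2norm (\<theta> - \<theta>star n) \<le> \<delta> n} (ext0 (p n) x) :: real) \<in> borel_measurable (Leb (p n))"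
        by (rule ind_meas_B[OF ths])
      have ppm[measurable]: "(\<lambda>Z. post_prob dens (\<pi> n) n (p n) Z {\<theta>. l2norm (\<theta> - \<theta>star n) powr \<beta> > L1 * \<delta> n}) \<in> borel_measurable (P n)"
        unfolding post_prob_def post_norm_def P_def
        by (intro borel_measurable_divide int_meas joint_meas_post[OF dens_joint \<pi>m ibc_m d0m]
             joint_meas_post(3)[OF dens_joint \<pi>m ibc_m d0m])
      have B1s: "B1 K L1 n \<in> sets (P n)" unfolding B1_def by measurable
      have i2m[measurable]: "(\<lambda>Z. \<integral>x. indicator {\<theta>. l2norm (\<theta> - \<theta>star n) \<le> \<delta> n} (ext0 (p n) x)
                   * (lik dens n (ext0 (p n) x) Z / lik dens n \<theta>0 Z) * \<pi> n (ext0 (p n) x) \<partial>Leb (p n)) \<in> borel_measurable (P n)"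
        unfolding P_def by (intro int_meas joint_meas_post(2)[OF dens_joint \<pi>m ib_m d0m])
      have B2s: "B2 C3 n \<in> sets (P n)" unfolding B2_def by measurable
      obtain N0 where N0: "{Z \<in> space (P n). \<not> (0 < post_norm dens (\<pi> n) n (p n) Z
       \<and> integrable (Leb (p n)) (\<lambda>x. lik dens n (ext0 (p n) x) Z * \<pi> n (ext0 (p n) x))
       \<and> (\<forall>j. integrable (Leb (p n)) (\<lambda>x. ext0 (p n) x j * lik dens n (ext0 (p n) x) Z * \<pi> n (ext0 (p n) x))))} \<subseteq> N0"
        and N0e: "emeasure (P n) N0 = 0" and N0s: "N0 \<in> sets (P n)"
        using post_welldef[of n] unfolding P_def by (rule AE_E) blast
      have m1: "measure (P n) (B1 K L1 n) \<le> C2 * exp (- C1 * s)" using A1[of n] by (simp only: ex)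
      have m2: "measure (P n) (B2 C3 n) \<le> exp (- C4 * s)" using A2[of n] by (simp only: ex)
      have m4: "measure (P n) N0 = 0" using N0e by (simp add: measure_def)
      have m3: "measure (P n) B3 \<le> exp (- s)"
      proof -
        have "emeasure (P n) B3 \<le> ennreal (1 / (exp s * M2)) * (\<integral>\<^sup>+ Z. Nf Z * indicator (space (P n)) Z \<partial>P n)"
          unfolding B3_def by (rule nn_integral_Markov_inequality) auto
        also have "(\<integral>\<^sup>+ Z. Nf Z * indicator (space (P n)) Z \<partial>P n) = (\<integral>\<^sup>+ Z. Nf Z \<partial>P n)"
          by (rule nn_integral_cong) simp
        also have "\<dots> \<le> (\<integral>\<^sup>+ x. ennreal (g x) \<partial>Leb (p n))"
          using eri2 by (simp add: Nf_def P_def)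
        also have "\<dots> \<le> ennreal M2"
          unfolding g_def M2_def
          by (rule second_mom[OF ths thstar_bd]) (use \<pi>pos prior_prob M in \<open>auto intro: less_imp_le\<close>)
        finally have "emeasure (P n) B3 \<le> ennreal (1 / (exp s * M2)) * ennreal M2"
          by (simp add: mult_left_mono)
        also have "\<dots> = ennreal (exp (- s))"
          using M2 by (simp add: ennreal_mult[symmetric] exp_minus field_simps)
        finally have "ennreal (measure (P n) B3) \<le> ennreal (exp (- s))"
          by (simp add: Pn.emeasure_eq_measure)
        then show ?thesis by (simp add: ennreal_le_iff)
      qed
      have sub: "S \<subseteq> B1 K L1 n \<union> B2 C3 n \<union> B3 \<union> N0"
      proof
        fix Z assume ZS: "Z \<in> S"
        show "Z \<in> B1 K L1 n \<union> B2 C3 n \<union> B3 \<union> N0"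
        proof (rule ccontr)
          assume nb: "Z \<notin> B1 K L1 n \<union> B2 C3 n \<union> B3 \<union> N0"
          have Zsp: "Z \<in> space (P n)" using ZS by (simp add: S_def P_def)
          have hprop: "0 < post_norm dens (\<pi> n) n (p n) Z
               \<and> integrable (Leb (p n)) (\<lambda>x. lik dens n (ext0 (p n) x) Z * \<pi> n (ext0 (p n) x))
               \<and> (\<forall>j. integrable (Leb (p n)) (\<lambda>x. ext0 (p n) x j * lik dens n (ext0 (p n) x) Z * \<pi> n (ext0 (p n) x)))"
            using N0 nb Zsp by blast
          have b1': "post_prob dens (\<pi> n) n (p n) Z {\<theta>. l2norm (\<theta> - \<theta>star n) powr \<beta> > L1 * \<delta> n} < exp (- K * real n * (\<delta> n)^2)"
            using nb Zsp by (auto simp: B1_def not_le)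
          then have b1: "post_prob dens (\<pi> n) n (p n) Z {\<theta>. l2norm (\<theta> - \<theta>star n) powr \<beta> > L1 * \<delta> n} < exp (- (2 * (C3 + 3)) * s)"
            by (simp only: ex K_def)
          have b2: "exp (- C3 * s) < (\<integral>x. indicator {\<theta>. l2norm (\<theta> - \<theta>star n) \<le> \<delta> n} (ext0 (p n) x)
                   * (lik dens n (ext0 (p n) x) Z / lik dens n \<theta>0 Z) * \<pi> n (ext0 (p n) x) \<partial>Leb (p n))"
          proof -
            have "exp (- C3 * real n * (\<delta> n)^2) < (\<integral>x. indicator {\<theta>. l2norm (\<theta> - \<theta>star n) \<le> \<delta> n} (ext0 (p n) x)
                   * (lik dens n (ext0 (p n) x) Z / lik dens n \<theta>0 Z) * \<pi> n (ext0 (p n) x) \<partial>Leb (p n))"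
              using nb Zsp by (auto simp: B2_def not_le)
            then show ?thesis by (simp only: ex)
          qed
          have b3: "Nf Z < ennreal (exp s * M2)"
          proof (rule ccontr)
            assume "\<not> Nf Z < ennreal (exp s * M2)"
            then have "ennreal (exp s * M2) \<le> Nf Z" by simp
            then have "ennreal (1 / (exp s * M2)) * ennreal (exp s * M2) \<le> ennreal (1 / (exp s * M2)) * Nf Z"
              by (rule mult_left_mono) simp
            moreover have "ennreal (1 / (exp s * M2)) * ennreal (exp s * M2) = 1"
              using M2 by (simp add: ennreal_mult[symmetric])
            ultimately have "Z \<in> B3" using Zsp by (simp add: B3_def)
            then show False using nb by blast
          qed
          have pw: "l2norm (post_mean dens (\<pi> n) n (p n) Z - \<theta>star n) \<le> (L1 * \<delta> n) powr (1/\<beta>) + exp (- s)"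
          proof (rule pointwise[where ?\<theta>0.0=\<theta>0 and ?C3.0=C3 and ?M2.0=M2])
            show "\<theta>star n \<in> Rp (p n)" by (rule ths)
            show "integrable (Leb (p n)) (\<lambda>x. lik dens n (ext0 (p n) x) Z * \<pi> n (ext0 (p n) x))" using hprop by blast
            show "0 < post_norm dens (\<pi> n) n (p n) Z" using hprop by blast
            show "\<forall>j. integrable (Leb (p n)) (\<lambda>x. ext0 (p n) x j * lik dens n (ext0 (p n) x) Z * \<pi> n (ext0 (p n) x))" using hprop by blast
            show "\<And>x. 0 \<le> lik dens n (ext0 (p n) x) Z * \<pi> n (ext0 (p n) x)"
              using lik_nonneg[OF dn Zsp[unfolded P_def]] \<pi>pos by (simp add: less_imp_le)
            show "0 \<le> lik dens n \<theta>0 Z" using lik_nonneg[OF d0n Zsp[unfolded P_def]] .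
            show "\<beta> \<ge> 1" by (rule beta_ge)
            show "0 < L1" by (rule L1(2))
            show "0 < \<delta> n" by (rule delta_pos)
            show "0 < C3" by (rule C3)
            show "1 \<le> M2" by (rule M2)
            show "0 \<le> s" by (rule s0)
            show "ln M2 \<le> s" by (rule sT)
            show "post_prob dens (\<pi> n) n (p n) Z {\<theta>. l2norm (\<theta> - \<theta>star n) powr \<beta> > L1 * \<delta> n} < exp (- (2 * (C3 + 3)) * s)"
              by (rule b1)
            show "exp (- C3 * s) < (\<integral>x. indicator {\<theta>. l2norm (\<theta> - \<theta>star n) \<le> \<delta> n} (ext0 (p n) x)
                   * (lik dens n (ext0 (p n) x) Z / lik dens n \<theta>0 Z) * \<pi> n (ext0 (p n) x) \<partial>Leb (p n))"
              by (rule b2)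
            show "(\<integral>\<^sup>+ x. ennreal (((\<Sum>j<p n. (x j - \<theta>star n j)^2) * \<pi> n (ext0 (p n) x))
                   * (lik dens n (ext0 (p n) x) Z / lik dens n \<theta>0 Z)) \<partial>Leb (p n)) < ennreal (exp s * M2)"
              using b3 by (simp add: Nf_def g_def)
          qed
          define pm where "pm = post_mean dens (\<pi> n) n (p n) Z"
          have pm0: "\<And>i. i \<ge> p n \<Longrightarrow> pm i = 0" by (simp add: pm_def post_mean_def ext0_def)
          have th0: "\<And>i. i \<ge> p n \<Longrightarrow> \<theta>star n i = 0" using ths by (simp add: Rp_def)
          have sum1: "summable (\<lambda>i. ((pm - \<theta>star n) i)^2)"
            by (rule l2_summable_fin[of "p n"]) (simp add: pm0 th0)
          have sumth0: "summable (\<lambda>i. (\<theta>0 i)^2)" using theta0 Theta_l2 by (auto simp: l2seq_def)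
          have sum2: "summable (\<lambda>i. ((\<theta>star n - \<theta>0) i)^2)"
          proof -
            have "summable (\<lambda>i. (\<theta>star n i + (- \<theta>0 i))^2)"
              by (rule l2_summable_add) (use l2_summable_fin[of "p n" "\<theta>star n"] th0 sumth0 in auto)
            then show ?thesis by simp
          qed
          have "l2norm (pm - \<theta>0) = l2norm (\<lambda>i. (pm - \<theta>star n) i + (\<theta>star n - \<theta>0) i)"
            by (rule arg_cong[where f=l2norm]) (simp add: fun_eq_iff)
          also have "\<dots> \<le> l2norm (pm - \<theta>star n) + l2norm (\<theta>star n - \<theta>0)"
            by (rule l2norm_triangle[OF sum1 sum2])
          also have "l2norm (\<theta>star n - \<theta>0) = l2norm (\<theta>0 - \<theta>star n)"
            unfolding l2norm_def by (simp add: power2_commute)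
          also have "\<dots> \<le> c0 * (\<delta> n) powr (1 / \<beta>)" by (rule close)
          finally have X: "l2norm (pm - \<theta>0) \<le> l2norm (pm - \<theta>star n) + c0 * (\<delta> n) powr (1 / \<beta>)" by (simp add: fun_diff_def)
          have tri: "l2norm (pm - \<theta>0) \<le> (L1 * \<delta> n) powr (1/\<beta>) + exp (- s) + c0 * (\<delta> n) powr (1 / \<beta>)"
            using X pw unfolding pm_def by linarith
          have bpos: "\<beta> > 0" using beta_ge by simp
          have L0pos: "0 < L1 powr (1/\<beta>) + c0" using c0_pos powr_ge_zero[of L1 "1/\<beta>"] by linarith
          have L0eq: "L0 powr (1/\<beta>) = L1 powr (1/\<beta>) + c0"
            unfolding L0_def using L0pos bpos by (simp add: powr_powr)
          have "L1 powr (1/\<beta>) + c0 \<le> L powr (1/\<beta>)"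
            unfolding L0eq[symmetric] using LL0 bpos L0pos by (intro powr_mono2) (auto simp: L0_def)
          then have "(L1 powr (1/\<beta>) + c0) * (\<delta> n) powr (1/\<beta>) \<le> L powr (1/\<beta>) * (\<delta> n) powr (1/\<beta>)"
            by (rule mult_right_mono) simp
          moreover have "(L1 * \<delta> n) powr (1/\<beta>) = L1 powr (1/\<beta>) * (\<delta> n) powr (1/\<beta>)"
            using L1(2) delta_pos[of n] by (simp add: powr_mult)
          ultimately have "l2norm (pm - \<theta>0) \<le> exp (- s) + L powr (1/\<beta>) * (\<delta> n) powr (1/\<beta>)"
            using tri by (simp add: algebra_simps)
          moreover have "exp (- real n * (\<delta> n)^2) = exp (- s)" by (simp add: s_def)
          ultimately show False using ZS by (simp add: S_def pm_def)
        qed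
      qed
      have "measure (P n) S \<le> measure (P n) (B1 K L1 n \<union> B2 C3 n \<union> B3 \<union> N0)"
        by (rule Pn.finite_measure_mono[OF sub]) (use B1s B2s B3s N0s in auto)
      also have "\<dots> \<le> measure (P n) (B1 K L1 n \<union> B2 C3 n \<union> B3) + measure (P n) N0"
        by (rule measure_Un_le) (use B1s B2s B3s N0s in auto)
      also have "\<dots> \<le> measure (P n) (B1 K L1 n \<union> B2 C3 n) + measure (P n) B3 + measure (P n) N0"
        using measure_Un_le[of "B1 K L1 n \<union> B2 C3 n" "P n" B3] B1s B2s B3s by auto
      also have "\<dots> \<le> measure (P n) (B1 K L1 n) + measure (P n) (B2 C3 n) + measure (P n) B3 + measure (P n) N0"
        using measure_Un_le[of "B1 K L1 n" "P n" "B2 C3 n"] B1s B2s by auto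
      also have "\<dots> \<le> C2 * exp (- C1 * s) + exp (- C4 * s) + exp (- s) + 0"
        using m1 m2 m3 m4 by linarith
      also have "\<dots> \<le> C2 * exp (- c * s) + exp (- c * s) + exp (- c * s)"
      proof -
        have "c \<le> C1" "c \<le> C4" "c \<le> 1" by (auto simp: c_def)
        then have "c * s \<le> C1 * s" "c * s \<le> C4 * s" "c * s \<le> 1 * s" using s0 by (simp_all only: mult_right_mono)
        then have e: "exp (- C1 * s) \<le> exp (- c * s)" "exp (- C4 * s) \<le> exp (- c * s)" "exp (- s) \<le> exp (- c * s)"
          by auto
        have "C2 * exp (- C1 * s) \<le> C2 * exp (- c * s)" using C2 e(1) by (intro mult_left_mono) auto
        then show ?thesis using e(2,3) by linarith
      qed
      also have "\<dots> = (C2 + 2) * exp (- c * s)" by (simp add: algebra_simps)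
      also have "\<dots> \<le> c' * exp (- c * s)" by (intro mult_right_mono) (auto simp: c'_def)
      finally show ?thesis unfolding goal_rhs by (simp add: P_def)

    qed
        then show "measure (sample \<nu> dens \<theta>0 n) {Z \<in> space (sample \<nu> dens \<theta>0 n).
                l2norm (post_mean dens (\<pi> n) n (p n) Z - \<theta>0)
                  > exp (- real n * (\<delta> n)^2) + L powr (1 / \<beta>) * (\<delta> n) powr (1 / \<beta>)}
           \<le> c' * exp (- c * n * (\<delta> n)^2)" by (simp only: S_def)
  qed
qed

end
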